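(* Let $1\le k\le N-1$ satisfy $\phi^{k-1}-\phi^k>\phi^k-\phi^{k+1}$, let $F\in\tilde{\mathcal F}^k$, let $\mathcal U$ be an atom of $\mathfrak A_k$, and set $$\mathcal D=\bigcup_{\beta\in\mathcal N^{in}_{\mathcal U}(F)}\mathcal VT^F_\beta.$$ Then (i) $\mathcal D\cap\mathcal U=\emptyset$; (ii) the sets $\mathcal VT^F_\beta$, $\beta\in\mathcal N^{in}_{\mathcal U}(F)$, are pairwise disjoint; (iii) there is a forest $G\in\tilde{\mathcal F}^k$ such that the arcs leaving the vertices of $\mathcal N\setminus\mathcal D$ are the same in $G$ and $F$, and $\mathcal N^{in}_{\mathcal U}(G)=\emptyset$.
   Context: $V$ is a digraph with vertex set $\mathcal N$, $|\mathcal N|=N$, real arc weights, having at least one spanning tree. An (entering) forest is a digraph in which every vertex has at most one outgoing arc and there is no directed cycle; its weakly connected components are trees, each with a root (the unique vertex with no outgoing arc). For a vertex $\beta$, $T^F_\beta$ is the inclusion-maximal subtree of $F$ rooted at $\beta$, i.e. the subgraph induced by all vertices from which $\beta$ is reachable by a directed path in $F$. $\mathcal F^k$ is the set of spanning forests of $V$ with exactly $k$ trees; $\Upsilon^F$ is total arc weight; $\phi^k=\min_{\mathcal F^k}\Upsilon^F$, $\phi^0=\infty$; $\tilde{\mathcal F}^k$ the forests in $\mathcal F^k$ of weight $\phi^k$. $\mathfrak A_k$ is the algebra of subsets of $\mathcal N$ generated by the vertex sets of trees of forests in $\tilde{\mathcal F}^k$; atoms are its minimal nonempty elements. $\mathcal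 N^{in}_{\mathcal U}(G)$ is the set of tails of arcs of $G$ whose head is in $\mathcal U$ and whose tail is not. *)

theory Defs
  imports "HOL-Analysis.Analysis"
begin

text \<open>A weighted digraph is given by a finite vertex set Nv, an arc set Ar of pairs
  (tail, head) contained in Nv \<times> Nv, and a real weight function w on arcs.\<close>

definition wdigraph :: "'a set \<Rightarrow> ('a \<times> 'a) set \<Rightarrow> bool" where
  "wdigraph Nv Ar \<longleftrightarrow> finite Nv \<and> Ar \<subseteq> Nv \<times> Nv"

definition is_forest :: "('a \<times> 'a) set \<Rightarrow> bool" where
  "is_forest F \<longleftrightarrow> (\<forall>u v v'. (u, v) \<in> F \<longrightarrow> (u, v') \<in> F \<longrightarrow> v = v') \<and> acyclic F"

definition spanning_forest :: "'a set \<Rightarrow> ('a \<times> 'a) set \<Rightarrow> ('a \<times> 'a) set \<Rightarrow> bool" where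
  "spanning_forest Nv Ar F \<longleftrightarrow> F \<subseteq> Ar \<and> is_forest F"

text \<open>Roots: vertices without outgoing arc; each tree has exactly one root.\<close>
definition roots :: "'a set \<Rightarrow> ('a \<times> 'a) set \<Rightarrow> 'a set" where
  "roots Nv F = {v \<in> Nv. \<forall>u. (v, u) \<notin> F}"

definition ntrees :: "'a set \<Rightarrow> ('a \<times> 'a) set \<Rightarrow> nat" where
  "ntrees Nv F = card (roots Nv F)"

definition subtree_verts :: "'a set \<Rightarrow> ('a \<times> 'a) set \<Rightarrow> 'a \<Rightarrow> 'a set" where
  "subtree_verts Nv F \<beta> = {v \<in> Nv. (v, \<beta>) \<in> F\<^sup>*}"

definition forests_k :: "'a set \<Rightarrow> ('a \<times> 'a) set \<Rightarrow> nat \<Rightarrow> ('a \<times> 'a) set set" where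
  "forests_k Nv Ar k = {F. spanning_forest Nv Ar F \<and> ntrees Nv F = k}"

definition weight :: "('a \<times> 'a \<Rightarrow> real) \<Rightarrow> ('a \<times> 'a) set \<Rightarrow> real" where
  "weight w F = (\<Sum>e\<in>F. w e)"

definition phi :: "'a set \<Rightarrow> ('a \<times> 'a) set \<Rightarrow> ('a \<times> 'a \<Rightarrow> real) \<Rightarrow> nat \<Rightarrow> ereal" where
  "phi Nv Ar w k = (if k = 0 then \<infinity> else ereal (Min (weight w ` forests_k Nv Ar k)))"

definition opt_forests :: "'a set \<Rightarrow> ('a \<times> 'a) set \<Rightarrow> ('a \<times> 'a \<Rightarrow> real) \<Rightarrow> nat \<Rightarrow> ('a \<times> 'a) set set" where
  "opt_forests Nv Ar w k = {F \<in> forests_k Nv Ar k. ereal (weight w F) = phi Nv Ar w k}"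

definition tree_vertex_sets :: "'a set \<Rightarrow> ('a \<times> 'a) set \<Rightarrow> 'a set set" where
  "tree_vertex_sets Nv F = subtree_verts Nv F ` roots Nv F"

definition gen_algebra :: "'a set \<Rightarrow> 'a set set \<Rightarrow> 'a set set" where
  "gen_algebra Nv G = \<Inter>{M. algebra Nv M \<and> G \<subseteq> M}"

definition alg_k :: "'a set \<Rightarrow> ('a \<times> 'a) set \<Rightarrow> ('a \<times> 'a \<Rightarrow> real) \<Rightarrow> nat \<Rightarrow> 'a set set" where
  "alg_k Nv Ar w k = gen_algebra Nv (\<Union>F\<in>opt_forests Nv Ar w k. tree_vertex_sets Nv F)"

definition is_atom :: "'a set set \<Rightarrow> 'a set \<Rightarrow> bool" where
  "is_atom M U \<longleftrightarrow> U \<in> M \<and> U \<noteq> {} \<and> (\<forall>V\<in>M. V \<noteq> {} \<longrightarrow> V \<subseteq> U \<longrightarrow> V = U)"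

definition in_tails :: "'a set \<Rightarrow> ('a \<times> 'a) set \<Rightarrow> 'a set" where
  "in_tails U G = {u. \<exists>v. (u, v) \<in> G \<and> v \<in> U \<and> u \<notin> U}"

definition out_arcs :: "('a \<times> 'a) set \<Rightarrow> 'a \<Rightarrow> ('a \<times> 'a) set" where
  "out_arcs G v = {e \<in> G. fst e = v}"

end

theory Submission
  imports Defs
begin

definition functional :: "('a \<times> 'a) set \<Rightarrow> bool" where
  "functional F \<longleftrightarrow> (\<forall>u v v'. (u, v) \<in> F \<longrightarrow> (u, v') \<in> F \<longrightarrow> v = v')"

lemma is_forest_functional: "is_forest F \<Longrightarrow> functional F"
  by (simp add: is_forest_def functional_def)

lemma is_forest_acyclic: "is_forest F \<Longrightarrow> acyclic F"
  by (simp add: is_forest_def)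

lemma functionalD: "functional F \<Longrightarrow> (u, v) \<in> F \<Longrightarrow> (u, v') \<in> F \<Longrightarrow> v = v'"
  by (simp add: functional_def)

lemma comparable:
  assumes f: "functional F" and a: "(x, a) \<in> F\<^sup>*" and b: "(x, b) \<in> F\<^sup>*"
  shows "(a, b) \<in> F\<^sup>* \<or> (b, a) \<in> F\<^sup>*"
  using a b
proof (induction arbitrary: b rule: converse_rtrancl_induct)
  case base
  then show ?case by simp
next
  case (step y z)
  show ?case
  proof (cases "b = y")
    case True
    then show ?thesis using step by (meson converse_rtrancl_into_rtrancl)
  next
    case False
    then have "(y, b) \<in> F\<^sup>+" using step.prems rtranclD by metis
    then obtain z' where "(y, z') \<in> F" "(z', b) \<in> F\<^sup>*" by (meson tranclD)
    then have "z' = z" using f step.hyps(1) functionalD by metis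
    then show ?thesis using step.IH \<open>(z', b) \<in> F\<^sup>*\<close> by simp
  qed
qed

definition terminal :: "('a \<times> 'a) set \<Rightarrow> 'a \<Rightarrow> bool" where
  "terminal F r \<longleftrightarrow> (\<forall>u. (r, u) \<notin> F)"

definition rt :: "('a \<times> 'a) set \<Rightarrow> 'a \<Rightarrow> 'a" where
  "rt F v = (THE r. (v, r) \<in> F\<^sup>* \<and> terminal F r)"

lemma terminal_rtrancl: "terminal F r \<Longrightarrow> (r, s) \<in> F\<^sup>* \<Longrightarrow> s = r"
  unfolding terminal_def by (metis converse_rtranclE)

lemma rt_exists:
  assumes "finite F" "acyclic F"
  shows "\<exists>r. (v, r) \<in> F\<^sup>* \<and> terminal F r"
proof -
  have wf: "wf (F\<inverse>)" using assms finite_acyclic_wf_converse by blast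
  show ?thesis
  proof (induction v rule: wf_induct_rule[OF wf])
    case (1 v)
    show ?case
    proof (cases "terminal F v")
      case True then show ?thesis by blast
    next
      case False
      then obtain u where "(v, u) \<in> F" unfolding terminal_def by blast
      then have "(u, v) \<in> F\<inverse>" by simp
      from "1"[OF this] obtain r where "(u, r) \<in> F\<^sup>*" "terminal F r" by blast
      then show ?thesis using \<open>(v, u) \<in> F\<close> by (meson converse_rtrancl_into_rtrancl)
    qed
  qed
qed

lemma rt_unique:
  assumes "functional F" "(v, r) \<in> F\<^sup>*" "terminal F r" "(v, r') \<in> F\<^sup>*" "terminal F r'"
  shows "r = r'"
  using comparable[OF assms(1,2,4)] assms terminal_rtrancl by metis

locale forest =
  fixes F :: "('a \<times> 'a) set"
  assumes fin: "finite F" and isf: "is_forest F"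
begin

lemma func: "functional F" using isf is_forest_functional by blast
lemma acyc: "acyclic F" using isf is_forest_acyclic by blast

lemma rt: "(v, rt F v) \<in> F\<^sup>* \<and> terminal F (rt F v)"
proof -
  obtain r where r: "(v, r) \<in> F\<^sup>*" "terminal F r" using rt_exists[OF fin acyc] by blast
  have "(THE r. (v, r) \<in> F\<^sup>* \<and> terminal F r) = r"
    using r rt_unique[OF func] by (intro the_equality) auto
  then show ?thesis using r unfolding rt_def by simp
qed

lemma rt_path: "(v, rt F v) \<in> F\<^sup>*" using rt by blast
lemma rt_terminal: "terminal F (rt F v)" using rt by blast

lemma rt_eqI: "(v, r) \<in> F\<^sup>* \<Longrightarrow> terminal F r \<Longrightarrow> rt F v = r"
  using rt rt_unique[OF func] by blast

lemma rt_rtrancl: "(v, u) \<in> F\<^sup>* \<Longrightarrow> rt F v = rt F u"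
  using rt_eqI rt by (meson rtrancl_trans)

lemma rt_arc: "(v, u) \<in> F \<Longrightarrow> rt F v = rt F u"
  using rt_rtrancl by blast

lemma rt_term: "terminal F v \<Longrightarrow> rt F v = v"
  using rt_eqI by blast

lemma step_to: "(v, b) \<in> F\<^sup>* \<Longrightarrow> v \<noteq> b \<Longrightarrow> (v, u) \<in> F \<Longrightarrow> (u, b) \<in> F\<^sup>*"
  by (metis func functionalD rtranclD tranclD)

end



lemma forest_rt_agree:
  assumes F: "forest F" and K: "forest K"
    and agree: "\<And>z u. (v, z) \<in> F\<^sup>* \<Longrightarrow> (z, u) \<in> K \<longleftrightarrow> (z, u) \<in> F"
  shows "rt K v = rt F v"
proof -
  interpret F: forest F by (rule F)
  interpret K: forest K by (rule K)
  have path: "(v, z) \<in> F\<^sup>* \<Longrightarrow> (v, z) \<in> K\<^sup>*" for z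
  proof (induction rule: rtrancl_induct)
    case base then show ?case by simp
  next
    case (step y z)
    then have "(y, z) \<in> K" using agree by blast
    then show ?case using step.IH by (meson rtrancl_into_rtrancl)
  qed
  have "terminal K (rt F v)"
    using F.rt_terminal agree[OF F.rt_path] unfolding terminal_def by blast
  then show ?thesis using K.rt_eqI path[OF F.rt_path] by blast
qed

lemma acyclic_split_aux:
  assumes cl: "\<And>x y. (x, y) \<in> K \<Longrightarrow> x \<notin> S \<Longrightarrow> y \<notin> S"
    and xy: "(x, y) \<in> K\<^sup>+"
  shows "(y \<in> S \<longrightarrow> x \<in> S \<and> (x, y) \<in> (K \<inter> S \<times> S)\<^sup>+) \<and>
      (x \<notin> S \<longrightarrow> y \<notin> S \<and> (x, y) \<in> (K \<inter> (- S) \<times> (- S))\<^sup>+)"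
  using xy
proof (induction rule: trancl_induct)
  case (base y)
  have A: "y \<in> S \<longrightarrow> x \<in> S \<and> (x, y) \<in> (K \<inter> S \<times> S)\<^sup>+"
  proof
    assume "y \<in> S"
    then have "x \<in> S" using cl[OF base] by blast
    then have "(x, y) \<in> K \<inter> S \<times> S" using base \<open>y \<in> S\<close> by simp
    then show "x \<in> S \<and> (x, y) \<in> (K \<inter> S \<times> S)\<^sup>+" using \<open>x \<in> S\<close> by (simp add: r_into_trancl')
  qed
  have B: "x \<notin> S \<longrightarrow> y \<notin> S \<and> (x, y) \<in> (K \<inter> (- S) \<times> (- S))\<^sup>+"
  proof
    assume "x \<notin> S"
    then have "y \<notin> S" using cl[OF base] by blast
    then have "(x, y) \<in> K \<inter> (- S) \<times> (- S)" using base \<open>x \<notin> S\<close> by simp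
    then show "y \<notin> S \<and> (x, y) \<in> (K \<inter> (- S) \<times> (- S))\<^sup>+" using \<open>y \<notin> S\<close> by (simp add: r_into_trancl')
  qed
  from A B show ?case by (rule conjI)
next
  case (step y z)
  have A: "z \<in> S \<longrightarrow> x \<in> S \<and> (x, z) \<in> (K \<inter> S \<times> S)\<^sup>+"
  proof
    assume "z \<in> S"
    then have "y \<in> S" using cl step.hyps(2) by blast
    then have 1: "x \<in> S" "(x, y) \<in> (K \<inter> S \<times> S)\<^sup>+" using step.IH by simp_all
    have "(y, z) \<in> K \<inter> S \<times> S" using step.hyps(2) \<open>y \<in> S\<close> \<open>z \<in> S\<close> by simp
    then show "x \<in> S \<and> (x, z) \<in> (K \<inter> S \<times> S)\<^sup>+"
      using 1 by (simp add: trancl_into_trancl)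
  qed
  have B: "x \<notin> S \<longrightarrow> z \<notin> S \<and> (x, z) \<in> (K \<inter> (- S) \<times> (- S))\<^sup>+"
  proof
    assume "x \<notin> S"
    then have 1: "y \<notin> S" "(x, y) \<in> (K \<inter> (- S) \<times> (- S))\<^sup>+" using step.IH by simp_all
    then have "z \<notin> S" using cl step.hyps(2) by blast
    have "(y, z) \<in> K \<inter> (- S) \<times> (- S)" using step.hyps(2) 1(1) \<open>z \<notin> S\<close> by simp
    then show "z \<notin> S \<and> (x, z) \<in> (K \<inter> (- S) \<times> (- S))\<^sup>+"
      using 1 \<open>z \<notin> S\<close> by (simp add: trancl_into_trancl)
  qed
  from A B show ?case by (rule conjI)
qed

lemma acyclic_split:
  assumes cl: "\<And>x y. (x, y) \<in> K \<Longrightarrow> x \<notin> S \<Longrightarrow> y \<notin> S"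
    and a1: "acyclic (K \<inter> S \<times> S)" and a2: "acyclic (K \<inter> (- S) \<times> (- S))"
  shows "acyclic K"
  unfolding acyclic_def
proof (intro allI notI)
  fix v assume "(v, v) \<in> K\<^sup>+"
  from acyclic_split_aux[OF cl this] a1 a2 show False unfolding acyclic_def by (cases "v \<in> S") auto
qed

definition mix :: "('a \<times> 'a) set \<Rightarrow> ('a \<times> 'a) set \<Rightarrow> 'a set \<Rightarrow> ('a \<times> 'a) set" where
  "mix F H X = {e \<in> F. fst e \<notin> X} \<union> {e \<in> H. fst e \<in> X}"

lemma mix_iff: "(a, b) \<in> mix F H X \<longleftrightarrow> (if a \<in> X then (a, b) \<in> H else (a, b) \<in> F)"
  unfolding mix_def by auto

lemma mix_functional: "functional F \<Longrightarrow> functional H \<Longrightarrow> functional (mix F H X)"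
  unfolding functional_def mix_iff by metis

lemma mix_subset: "mix F H X \<subseteq> F \<union> H"
  unfolding mix_def by auto

lemma roots_mix: "roots Nv (mix F H X) = (roots Nv F - X) \<union> (roots Nv H \<inter> X)"
  unfolding roots_def mix_iff by auto

lemma weight_mix:
  assumes "finite F" "finite H"
  shows "weight w (mix F H X) + weight w (mix H F X) = weight w F + weight w H"
proof -
  let ?A1 = "{e \<in> F. fst e \<notin> X}" and ?B1 = "{e \<in> F. fst e \<in> X}"
  let ?A2 = "{e \<in> H. fst e \<notin> X}" and ?B2 = "{e \<in> H. fst e \<in> X}"
  have f: "finite ?A1" "finite ?B1" "finite ?A2" "finite ?B2" using assms by auto
  have e1: "mix F H X = ?A1 \<union> ?B2" "mix H F X = ?A2 \<union> ?B1" unfolding mix_def by auto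
  have e2: "F = ?A1 \<union> ?B1" "H = ?A2 \<union> ?B2" by auto
  have s1: "sum w (?A1 \<union> ?B2) = sum w ?A1 + sum w ?B2"
    by (rule sum.union_disjoint) (use f in auto)
  have s2: "sum w (?A2 \<union> ?B1) = sum w ?A2 + sum w ?B1"
    by (rule sum.union_disjoint) (use f in auto)
  have s3: "sum w (?A1 \<union> ?B1) = sum w ?A1 + sum w ?B1"
    by (rule sum.union_disjoint) (use f in auto)
  have s4: "sum w (?A2 \<union> ?B2) = sum w ?A2 + sum w ?B2"
    by (rule sum.union_disjoint) (use f in auto)
  have "weight w (mix F H X) = sum w ?A1 + sum w ?B2" unfolding weight_def e1(1) s1 ..
  moreover have "weight w (mix H F X) = sum w ?A2 + sum w ?B1" unfolding weight_def e1(2) s2 ..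
  moreover have "weight w F = sum w ?A1 + sum w ?B1" unfolding weight_def using s3 e2(1) by metis
  moreover have "weight w H = sum w ?A2 + sum w ?B2" unfolding weight_def using s4 e2(2) by metis
  ultimately show ?thesis by simp
qed



locale prob =
  fixes Nv :: "'a set" and Ar :: "('a \<times> 'a) set" and w :: "'a \<times> 'a \<Rightarrow> real" and k :: nat
  assumes wd: "wdigraph Nv Ar" and k1: "1 \<le> k" and Nne: "Nv \<noteq> {}"
    and gap: "phi Nv Ar w (k - 1) - phi Nv Ar w k > phi Nv Ar w k - phi Nv Ar w (k + 1)"
begin

abbreviation "opt \<equiv> opt_forests Nv Ar w k"

lemma finNv: "finite Nv" using wd unfolding wdigraph_def by blast
lemma ArN: "Ar \<subseteq> Nv \<times> Nv" using wd unfolding wdigraph_def by blast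
lemma finAr: "finite Ar" using finNv ArN by (meson finite_SigmaI finite_subset)

lemma fin_forests: "finite (forests_k Nv Ar j)"
proof -
  have "forests_k Nv Ar j \<subseteq> Pow Ar" unfolding forests_k_def spanning_forest_def by blast
  then show ?thesis using finAr by (meson finite_Pow_iff finite_subset)
qed

definition Phi :: "nat \<Rightarrow> real" where "Phi j = Min (weight w ` forests_k Nv Ar j)"

lemma phi_eq: "j \<noteq> 0 \<Longrightarrow> phi Nv Ar w j = ereal (Phi j)"
  unfolding phi_def Phi_def by simp

lemma Phi_le: "K \<in> forests_k Nv Ar j \<Longrightarrow> Phi j \<le> weight w K"
  unfolding Phi_def using fin_forests by simp

lemma opt_weight: "F \<in> opt \<Longrightarrow> weight w F = Phi k"
  unfolding opt_forests_def using phi_eq k1 by auto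

lemma opt_forests_k: "F \<in> opt \<Longrightarrow> F \<in> forests_k Nv Ar k"
  unfolding opt_forests_def by blast

lemma optI: "K \<in> forests_k Nv Ar k \<Longrightarrow> weight w K = Phi k \<Longrightarrow> K \<in> opt"
  unfolding opt_forests_def using phi_eq k1 by auto

lemma sf_sub: "spanning_forest Nv Ar F \<Longrightarrow> F \<subseteq> Nv \<times> Nv"
  unfolding spanning_forest_def using ArN by blast

lemma sf_forest: "spanning_forest Nv Ar F \<Longrightarrow> forest F"
  unfolding spanning_forest_def forest_def using finAr by (meson finite_subset)

lemma opt_sf: "F \<in> opt \<Longrightarrow> spanning_forest Nv Ar F"
  unfolding opt_forests_def forests_k_def by blast

lemma opt_forest: "F \<in> opt \<Longrightarrow> forest F"
  using opt_sf sf_forest by blast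

lemma opt_ntrees: "F \<in> opt \<Longrightarrow> card (roots Nv F) = k"
  unfolding opt_forests_def forests_k_def ntrees_def by blast

lemma rt_in: assumes "spanning_forest Nv Ar F" "v \<in> Nv" shows "rt F v \<in> Nv"
proof -
  interpret forest F using sf_forest assms(1) .
  have "(v, rt F v) \<in> F\<^sup>*" by (rule rt_path)
  then show ?thesis using assms sf_sub[OF assms(1)]
    by (induction rule: rtrancl_induct) auto
qed

lemma rt_roots: assumes "spanning_forest Nv Ar F" "v \<in> Nv" shows "rt F v \<in> roots Nv F"
proof -
  interpret forest F using sf_forest assms(1) .
  show ?thesis using rt_in[OF assms] rt_terminal unfolding roots_def terminal_def by blast
qed

lemma ntrees_pos: "spanning_forest Nv Ar F \<Longrightarrow> 1 \<le> card (roots Nv F)"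
proof -
  assume sf: "spanning_forest Nv Ar F"
  obtain v where "v \<in> Nv" using Nne by blast
  then have "roots Nv F \<noteq> {}" using rt_roots[OF sf] by blast
  moreover have "finite (roots Nv F)" using finNv unfolding roots_def by simp
  ultimately show ?thesis by (simp add: Suc_leI card_gt_0_iff)
qed

lemma GM:
  assumes F: "F \<in> opt" and H: "H \<in> opt"
    and a1: "acyclic (mix F H X)" and a2: "acyclic (mix H F X)"
    and n1: "card (roots Nv (mix F H X)) = k + h" and n2: "card (roots Nv (mix H F X)) + h = k"
    and h: "h \<le> 1"
  shows "mix F H X \<in> opt \<and> mix H F X \<in> opt"
proof -
  let ?K = "mix F H X" and ?L = "mix H F X"
  interpret FF: forest F using opt_forest[OF F] .
  interpret HH: forest H using opt_forest[OF H] .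
  have sF: "F \<subseteq> Ar" and sH: "H \<subseteq> Ar" using opt_sf[OF F] opt_sf[OF H] unfolding spanning_forest_def by auto
  have sK: "spanning_forest Nv Ar ?K"
    unfolding spanning_forest_def is_forest_def
    using mix_subset[of F H X] sF sH a1 mix_functional[OF FF.func HH.func, of X]
    unfolding functional_def by blast
  have sL: "spanning_forest Nv Ar ?L"
    unfolding spanning_forest_def is_forest_def
    using mix_subset[of H F X] sF sH a2 mix_functional[OF HH.func FF.func, of X]
    unfolding functional_def by blast
  have wsum: "weight w ?K + weight w ?L = 2 * Phi k"
    using weight_mix[OF FF.fin HH.fin, of w X] opt_weight[OF F] opt_weight[OF H] by simp
  have "h = 0"
  proof (rule ccontr)
    assume "h \<noteq> 0"
    then have h1: "h = 1" using h by simp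
    have "1 \<le> card (roots Nv ?L)" using ntrees_pos[OF sL] .
    then have km: "k - 1 \<noteq> 0" using n2 h1 by simp
    have Kin: "?K \<in> forests_k Nv Ar (k + 1)" unfolding forests_k_def ntrees_def using sK n1 h1 by simp
    have Lin: "?L \<in> forests_k Nv Ar (k - 1)" unfolding forests_k_def ntrees_def using sL n2 h1 by simp
    have c1: "Phi (k + 1) \<le> weight w ?K" using Phi_le[OF Kin] .
    have c2: "Phi (k - 1) \<le> weight w ?L" using Phi_le[OF Lin] .
    have "ereal (Phi (k - 1)) - ereal (Phi k) > ereal (Phi k) - ereal (Phi (k + 1))"
      using gap phi_eq[OF km] phi_eq[of k] phi_eq[of "k+1"] k1 by simp
    then have "Phi (k - 1) - Phi k > Phi k - Phi (k + 1)" by simp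
    then show False using c1 c2 wsum by simp
  qed
  then have Kk: "?K \<in> forests_k Nv Ar k" and Lk: "?L \<in> forests_k Nv Ar k"
    unfolding forests_k_def ntrees_def using sK sL n1 n2 by auto
  have "Phi k \<le> weight w ?K" "Phi k \<le> weight w ?L" using Phi_le[OF Kk] Phi_le[OF Lk] by auto
  then have "weight w ?K = Phi k" "weight w ?L = Phi k" using wsum by auto
  then show ?thesis using optI Kk Lk by blast
qed

end



lemma gen_gen: "Gs \<subseteq> gen_algebra Nv Gs"
  unfolding gen_algebra_def by (rule Inter_greatest) simp

lemma gen_least: "algebra Nv M \<Longrightarrow> Gs \<subseteq> M \<Longrightarrow> gen_algebra Nv Gs \<subseteq> M"
  unfolding gen_algebra_def by (rule Inter_lower) simp

lemma gen_sub: "Gs \<subseteq> Pow Nv \<Longrightarrow> gen_algebra Nv Gs \<subseteq> Pow Nv"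
  using gen_least[OF algebra_Pow] .

lemma gen_Int:
  assumes A: "A \<in> gen_algebra Nv Gs" and B: "B \<in> gen_algebra Nv Gs"
  shows "A \<inter> B \<in> gen_algebra Nv Gs"
  unfolding gen_algebra_def
proof (rule InterI)
  fix M assume M: "M \<in> {M. algebra Nv M \<and> Gs \<subseteq> M}"
  then interpret algebra Nv M by blast
  have "A \<in> M" using A M unfolding gen_algebra_def by blast
  moreover have "B \<in> M" using B M unfolding gen_algebra_def by blast
  ultimately show "A \<inter> B \<in> M" by blast
qed

context prob
begin

definition gens :: "'a set set" where
  "gens = (\<Union>F\<in>opt. tree_vertex_sets Nv F)"

lemma alg_k_eq: "alg_k Nv Ar w k = gen_algebra Nv gens"
  unfolding alg_k_def gens_def ..

lemma gens_sub: "gens \<subseteq> Pow Nv"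
  unfolding gens_def tree_vertex_sets_def subtree_verts_def by (auto simp: Pow_def)

lemma subtree_mem: "v \<in> subtree_verts Nv F b \<longleftrightarrow> v \<in> Nv \<and> (v, b) \<in> F\<^sup>*"
  unfolding subtree_verts_def by blast

end

locale atomloc = prob +
  fixes U :: "'a set"
  assumes atom: "is_atom (alg_k Nv Ar w k) U"
begin

lemma U_alg: "U \<in> gen_algebra Nv gens" using atom unfolding is_atom_def alg_k_eq by blast

lemma U_sub: "U \<subseteq> Nv" using U_alg gen_sub[OF gens_sub] by blast

lemma U_ne: "U \<noteq> {}" using atom unfolding is_atom_def by blast

lemma A1:
  assumes G: "G \<in> opt" and u: "u \<in> U" and u': "u' \<in> U"
  shows "rt G u = rt G u'"
proof -
  interpret GG: forest G using opt_forest[OF G] .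
  have uN: "u \<in> Nv" using u U_sub by blast
  define r where "r = rt G u"
  have r: "r \<in> roots Nv G" unfolding r_def using rt_roots[OF opt_sf[OF G] uN] .
  define S where "S = subtree_verts Nv G r"
  have "S \<in> tree_vertex_sets Nv G" unfolding S_def tree_vertex_sets_def using r by (rule imageI)
  then have "S \<in> gens" unfolding gens_def using G by (rule UN_I[rotated])
  then have "S \<in> gen_algebra Nv gens" using gen_gen by (rule subsetD[rotated])
  then have I: "U \<inter> S \<in> gen_algebra Nv gens" using gen_Int[OF U_alg] by simp
  have "u \<in> S" unfolding S_def subtree_mem r_def using uN GG.rt_path by simp
  then have ne: "U \<inter> S \<noteq> {}" using u by blast
  have "\<forall>V\<in>alg_k Nv Ar w k. V \<noteq> {} \<longrightarrow> V \<subseteq> U \<longrightarrow> V = U" using atom unfolding is_atom_def by simp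
  then have "U \<inter> S = U" using I ne unfolding alg_k_eq by simp
  then have "u' \<in> S" using u' by blast
  then have p: "(u', r) \<in> G\<^sup>*" unfolding S_def subtree_mem by simp
  have t: "terminal G r" unfolding r_def by (rule GG.rt_terminal)
  have "rt G u' = r" by (rule GG.rt_eqI[OF p t])
  then show ?thesis unfolding r_def by simp
qed

lemma A2:
  assumes y: "y \<in> Nv" "y \<notin> U" and u: "u \<in> U"
  shows "\<exists>G\<in>opt. rt G y \<noteq> rt G u"
proof (rule ccontr)
  assume "\<not> ?thesis"
  then have eq: "\<forall>G\<in>opt. rt G y = rt G u" by blast
  define M where "M = {S. S \<subseteq> Nv \<and> (\<forall>a\<in>S. \<forall>b\<in>Nv. (\<forall>G\<in>opt. rt G a = rt G b) \<longrightarrow> b \<in> S)}"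
  have alg: "algebra Nv M"
    unfolding algebra_iff_Un
  proof (intro conjI ballI)
    show "M \<subseteq> Pow Nv" unfolding M_def by blast
    show "{} \<in> M" unfolding M_def by blast
  next
    fix a assume a: "a \<in> M"
    show "Nv - a \<in> M" unfolding M_def
    proof (intro CollectI conjI ballI impI)
      show "Nv - a \<subseteq> Nv" by blast
    next
      fix p b assume p: "p \<in> Nv - a" and b: "b \<in> Nv" and e: "\<forall>G\<in>opt. rt G p = rt G b"
      show "b \<in> Nv - a"
      proof (rule ccontr)
        assume "b \<notin> Nv - a"
        then have "b \<in> a" using b by blast
        moreover have "\<forall>G\<in>opt. rt G b = rt G p" using e by simp
        ultimately have "p \<in> a" using a p unfolding M_def by blast
        then show False using p by blast
      qed
    qed
  next
    fix a b assume "a \<in> M" "b \<in> M"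
    then show "a \<union> b \<in> M" unfolding M_def by blast
  qed
  have gM: "gens \<subseteq> M"
  proof
    fix S assume "S \<in> gens"
    then obtain G r where G: "G \<in> opt" and r: "r \<in> roots Nv G" and S: "S = subtree_verts Nv G r"
      unfolding gens_def tree_vertex_sets_def by blast
    interpret GG: forest G using opt_forest[OF G] .
    have rt: "terminal G r" using r unfolding roots_def terminal_def by blast
    show "S \<in> M" unfolding M_def
    proof (intro CollectI conjI ballI impI)
      show "S \<subseteq> Nv" unfolding S subtree_verts_def by blast
    next
      fix a b assume a: "a \<in> S" and b: "b \<in> Nv" and e: "\<forall>G\<in>opt. rt G a = rt G b"
      have "(a, r) \<in> G\<^sup>*" using a unfolding S subtree_mem by blast
      then have "rt G a = r" using GG.rt_eqI rt by blast
      then have "rt G b = r" using e G by simp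
      then have "(b, r) \<in> G\<^sup>*" using GG.rt_path by metis
      then show "b \<in> S" unfolding S subtree_mem using b by blast
    qed
  qed
  then have "U \<in> M" using gen_least[OF alg] U_alg by blast
  moreover have "\<forall>G\<in>opt. rt G u = rt G y" using eq by simp
  ultimately have "y \<in> U" using u y unfolding M_def by blast
  then show False using y by blast
qed


end



context prob
begin

lemma opt_sub: "F \<in> opt \<Longrightarrow> F \<subseteq> Nv \<times> Nv"
  using opt_sf sf_sub by blast

lemma finite_roots: "finite (roots Nv F)"
  using finNv unfolding roots_def by simp

lemma roots_terminal: "v \<in> roots Nv F \<Longrightarrow> terminal F v"
  unfolding roots_def terminal_def by blast

lemma CR:
  assumes F: "F \<in> opt" and H: "H \<in> opt" and bc: "(b, c) \<in> F" and sep: "rt H c \<noteq> rt H b"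
  defines "X \<equiv> subtree_verts Nv F b \<inter> {v. rt H v = rt H b}"
  shows "mix F H X \<in> opt \<and> mix H F X \<in> opt"
proof -
  interpret FF: forest F using opt_forest[OF F] .
  interpret HH: forest H using opt_forest[OF H] .
  define T where "T = subtree_verts Nv F b"
  define Q where "Q = {v. rt H v = rt H b}"
  have XTQ: "X = T \<inter> Q" unfolding X_def T_def Q_def ..
  have FN: "F \<subseteq> Nv \<times> Nv" using opt_sub[OF F] .
  have Tcl: "x \<in> T" if "(x, y) \<in> F" "y \<in> T" for x y
  proof -
    have "x \<in> Nv" using FN that(1) by blast
    moreover have "(y, b) \<in> F\<^sup>*" using that(2) unfolding T_def subtree_mem by blast
    then have "(x, b) \<in> F\<^sup>*" using that(1) by (meson converse_rtrancl_into_rtrancl)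
    ultimately show ?thesis unfolding T_def subtree_mem by blast
  qed
  have Tstep: "y \<in> T" if "x \<in> T" "(x, y) \<in> F" "x \<noteq> b" for x y
  proof -
    have "y \<in> Nv" using FN that(2) by blast
    moreover have "(x, b) \<in> F\<^sup>*" using that(1) unfolding T_def subtree_mem by blast
    then have "(y, b) \<in> F\<^sup>*" using FF.step_to that(2,3) by blast
    ultimately show ?thesis unfolding T_def subtree_mem by blast
  qed
  have Hq: "rt H y = rt H x" if "(x, y) \<in> H" for x y
    using HH.rt_arc[OF that] by simp
  have ac1: "acyclic (mix F H X)"
  proof (rule acyclic_split[where S = T])
    fix x y assume xy: "(x, y) \<in> mix F H X" and x: "x \<notin> T"
    then have "(x, y) \<in> F" unfolding mix_iff XTQ by simp
    then show "y \<notin> T" using Tcl x by blast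
  next
    show "acyclic (mix F H X \<inter> T \<times> T)"
    proof (rule acyclic_split[where S = "T - X"])
      fix x y assume xy: "(x, y) \<in> mix F H X \<inter> T \<times> T" and x: "x \<notin> T - X"
      then have xX: "x \<in> X" by blast
      have "(x, y) \<in> mix F H X" using xy by blast
      then have "(x, y) \<in> H" using xX unfolding mix_iff by simp
      then have "rt H y = rt H b" using Hq xX unfolding XTQ Q_def by simp
      then have "y \<in> X" using xy unfolding XTQ Q_def by simp
      then show "y \<notin> T - X" by blast
    next
      have "mix F H X \<inter> T \<times> T \<inter> (T - X) \<times> (T - X) \<subseteq> F" unfolding mix_def by auto
      then show "acyclic (mix F H X \<inter> T \<times> T \<inter> (T - X) \<times> (T - X))"
        using FF.acyc acyclic_subset by blast
    next
      have "mix F H X \<inter> T \<times> T \<inter> (- (T - X)) \<times> (- (T - X)) \<subseteq> H" unfolding mix_def by auto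
      then show "acyclic (mix F H X \<inter> T \<times> T \<inter> (- (T - X)) \<times> (- (T - X)))"
        using HH.acyc acyclic_subset by blast
    qed
  next
    have "mix F H X \<inter> (- T) \<times> (- T) \<subseteq> F" unfolding mix_def XTQ by auto
    then show "acyclic (mix F H X \<inter> (- T) \<times> (- T))" using FF.acyc acyclic_subset by blast
  qed
  have ac2: "acyclic (mix H F X)"
  proof (rule acyclic_split[where S = Q])
    fix x y assume xy: "(x, y) \<in> mix H F X" and x: "x \<notin> Q"
    then have "(x, y) \<in> H" unfolding mix_iff XTQ by simp
    then have "rt H y = rt H x" using Hq by blast
    then show "y \<notin> Q" using x unfolding Q_def by simp
  next
    show "acyclic (mix H F X \<inter> Q \<times> Q)"
    proof (rule acyclic_split[where S = "Q - X"])
      fix x y assume xy: "(x, y) \<in> mix H F X \<inter> Q \<times> Q" and x: "x \<notin> Q - X"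
      then have xX: "x \<in> X" by blast
      have "(x, y) \<in> mix H F X" using xy by blast
      then have xyF: "(x, y) \<in> F" using xX unfolding mix_iff by simp
      have yQ: "y \<in> Q" using xy by blast
      have "x \<noteq> b"
      proof
        assume "x = b"
        then have "y = c" using FF.func bc xyF functionalD by metis
        then show False using yQ sep unfolding Q_def by simp
      qed
      then have "y \<in> T" using Tstep xX xyF unfolding XTQ by blast
      then have "y \<in> X" using yQ unfolding XTQ by blast
      then show "y \<notin> Q - X" by blast
    next
      have "mix H F X \<inter> Q \<times> Q \<inter> (Q - X) \<times> (Q - X) \<subseteq> H" unfolding mix_def by auto
      then show "acyclic (mix H F X \<inter> Q \<times> Q \<inter> (Q - X) \<times> (Q - X))"
        using HH.acyc acyclic_subset by blast
    next
      have "mix H F X \<inter> Q \<times> Q \<inter> (- (Q - X)) \<times> (- (Q - X)) \<subseteq> F" unfolding mix_def by auto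
      then show "acyclic (mix H F X \<inter> Q \<times> Q \<inter> (- (Q - X)) \<times> (- (Q - X)))"
        using FF.acyc acyclic_subset by blast
    qed
  next
    have "mix H F X \<inter> (- Q) \<times> (- Q) \<subseteq> H" unfolding mix_def XTQ by auto
    then show "acyclic (mix H F X \<inter> (- Q) \<times> (- Q))" using HH.acyc acyclic_subset by blast
  qed
  have rFX: "roots Nv F \<inter> X = {}"
  proof (rule ccontr)
    assume "roots Nv F \<inter> X \<noteq> {}"
    then obtain v where v: "v \<in> roots Nv F" "v \<in> X" by blast
    have "(v, b) \<in> F\<^sup>*" using v(2) unfolding XTQ T_def by (simp add: subtree_mem)
    moreover have "terminal F v" using roots_terminal v(1) .
    ultimately have "b = v" using terminal_rtrancl by metis
    then have "terminal F b" using \<open>terminal F v\<close> by simp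
    then show False using bc unfolding terminal_def by blast
  qed
  have rHX: "roots Nv H \<inter> X \<subseteq> {rt H b}"
  proof
    fix v assume v: "v \<in> roots Nv H \<inter> X"
    have "terminal H v" using v roots_terminal by blast
    then have "rt H v = v" by (rule HH.rt_term)
    moreover have "rt H v = rt H b" using v unfolding XTQ Q_def by blast
    ultimately show "v \<in> {rt H b}" by simp
  qed
  define h where "h = card (roots Nv H \<inter> X)"
  have "card (roots Nv H \<inter> X) \<le> card {rt H b}" by (rule card_mono[OF _ rHX]) simp
  then have h1: "h \<le> 1" unfolding h_def by simp
  have fr: "finite (roots Nv F)" "finite (roots Nv H)" using finite_roots by auto
  have e1: "roots Nv (mix F H X) = roots Nv F \<union> (roots Nv H \<inter> X)"
    using roots_mix[of Nv F H X] rFX by blast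
  have "card (roots Nv F \<union> (roots Nv H \<inter> X)) = card (roots Nv F) + card (roots Nv H \<inter> X)"
    by (rule card_Un_disjoint) (use fr rFX in auto)
  then have n1: "card (roots Nv (mix F H X)) = k + h"
    unfolding e1 h_def using opt_ntrees[OF F] by simp
  have e2: "roots Nv (mix H F X) = roots Nv H - X"
    using roots_mix[of Nv H F X] rFX by blast
  have c2: "card (roots Nv H - X) = card (roots Nv H) - h"
    unfolding h_def using card_Diff_subset_Int fr(2) by (metis finite_Int)
  have c3: "h \<le> card (roots Nv H)"
    unfolding h_def using fr(2) by (simp add: card_mono)
  have n2: "card (roots Nv (mix H F X)) + h = k"
    unfolding e2 c2 using c3 opt_ntrees[OF H] by simp
  show ?thesis using GM[OF F H ac1 ac2 n1 n2 h1] .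
qed

end



lemma out_arcs_eqI: "(\<And>u. (v, u) \<in> A \<longleftrightarrow> (v, u) \<in> B) \<Longrightarrow> out_arcs A v = out_arcs B v"
  unfolding out_arcs_def by auto

lemma out_arcs_eqD: "out_arcs A v = out_arcs B v \<Longrightarrow> (v, u) \<in> A \<longleftrightarrow> (v, u) \<in> B"
  unfolding out_arcs_def by (metis (mono_tags, lifting) fst_conv mem_Collect_eq)

context atomloc
begin

lemma in_tails_Nv: "K \<in> opt \<Longrightarrow> in_tails U K \<subseteq> Nv"
  unfolding in_tails_def using opt_sub by blast

lemma finite_in_tails: "K \<in> opt \<Longrightarrow> finite (in_tails U K)"
  using in_tails_Nv finNv finite_subset by blast

lemma BC:
  assumes it: "in_tails U G = {}" and az: "(a, z) \<in> G\<^sup>*" and z: "z \<in> U"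
  shows "a \<in> U"
  using az z
proof (induction rule: converse_rtrancl_induct)
  case base then show ?case by simp
next
  case (step y z')
  then have "z' \<in> U" by simp
  show ?case
  proof (rule ccontr)
    assume "y \<notin> U"
    then have "y \<in> in_tails U G" unfolding in_tails_def using step.hyps(1) \<open>z' \<in> U\<close> by blast
    then show False using it by simp
  qed
qed

lemma MOD:
  assumes K: "K \<in> opt" and bx: "(\<beta>, x) \<in> K" and x: "x \<in> U" and b: "\<beta> \<notin> U"
  shows "\<exists>K'\<in>opt. (\<forall>v u. v \<notin> subtree_verts Nv K \<beta> \<longrightarrow> ((v, u) \<in> K' \<longleftrightarrow> (v, u) \<in> K))
     \<and> (\<forall>v\<in>U. \<forall>u. (v, u) \<in> K' \<longleftrightarrow> (v, u) \<in> K) \<and> in_tails U K' \<subseteq> in_tails U K - {\<beta>}"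
proof -
  have bN: "\<beta> \<in> Nv" using opt_sub[OF K] bx by blast
  obtain H where H: "H \<in> opt" and sep: "rt H \<beta> \<noteq> rt H x" using A2[OF bN b x] by blast
  interpret HH: forest H using opt_forest[OF H] .
  define X where "X = subtree_verts Nv K \<beta> \<inter> {v. rt H v = rt H \<beta>}"
  have sep': "rt H x \<noteq> rt H \<beta>" using sep by simp
  have opt': "mix K H X \<in> opt" using CR[OF K H bx sep'] unfolding X_def by blast
  have ag1: "(v, u) \<in> mix K H X \<longleftrightarrow> (v, u) \<in> K" if "v \<notin> X" for v u
    using that unfolding mix_iff by simp
  have UX: "v \<notin> X" if "v \<in> U" for v
  proof
    assume "v \<in> X"
    then have "rt H v = rt H \<beta>" unfolding X_def by blast
    moreover have "rt H v = rt H x" using A1[OF H that x] .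
    ultimately show False using sep by simp
  qed
  have "\<beta> \<in> subtree_verts Nv K \<beta>" using bN by (simp add: subtree_mem)
  then have bX: "\<beta> \<in> X" unfolding X_def by simp
  have it: "in_tails U (mix K H X) \<subseteq> in_tails U K - {\<beta>}"
  proof
    fix v assume "v \<in> in_tails U (mix K H X)"
    then obtain w where vw: "(v, w) \<in> mix K H X" and w: "w \<in> U" and v: "v \<notin> U"
      unfolding in_tails_def by blast
    have vX: "v \<notin> X"
    proof
      assume vX: "v \<in> X"
      then have "(v, w) \<in> H" using vw unfolding mix_iff by simp
      then have "rt H w = rt H v" using HH.rt_arc by simp
      also have "\<dots> = rt H \<beta>" using vX unfolding X_def by blast
      finally have "rt H w = rt H \<beta>" .
      moreover have "rt H w = rt H x" using A1[OF H w x] .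
      ultimately show False using sep by simp
    qed
    then have "(v, w) \<in> K" using ag1 vw by blast
    then have "v \<in> in_tails U K" unfolding in_tails_def using w v by blast
    moreover have "v \<noteq> \<beta>" using vX bX by blast
    ultimately show "v \<in> in_tails U K - {\<beta>}" by blast
  qed
  show ?thesis
  proof (intro bexI[of _ "mix K H X"] conjI allI impI ballI)
    fix v u assume "v \<notin> subtree_verts Nv K \<beta>"
    then have "v \<notin> X" unfolding X_def by blast
    then show "(v, u) \<in> mix K H X \<longleftrightarrow> (v, u) \<in> K" by (rule ag1)
  next
    fix v u assume "v \<in> U"
    then show "(v, u) \<in> mix K H X \<longleftrightarrow> (v, u) \<in> K" using ag1 UX by blast
  qed (use it opt' in auto)
qed

lemma bcsep_aux:
  assumes y: "y \<in> Nv" "y \<notin> U" and u0: "u0 \<in> U"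
  shows "H \<in> opt \<Longrightarrow> card (in_tails U H) = n \<Longrightarrow> rt H y \<noteq> rt H u0 \<Longrightarrow>
    \<exists>H'\<in>opt. in_tails U H' = {} \<and> rt H' y \<noteq> rt H' u0"
proof (induction n arbitrary: H rule: less_induct)
  case (less n H)
  show ?case
  proof (cases "in_tails U H = {}")
    case True then show ?thesis using less.prems by blast
  next
    case False
    then obtain \<beta> where "\<beta> \<in> in_tails U H" by blast
    then obtain x where bx: "(\<beta>, x) \<in> H" and x: "x \<in> U" and b: "\<beta> \<notin> U"
      unfolding in_tails_def by blast
    interpret HH: forest H using opt_forest[OF less.prems(1)] .
    obtain K' where K': "K' \<in> opt"
      and ag: "\<And>v u. v \<notin> subtree_verts Nv H \<beta> \<Longrightarrow> ((v, u) \<in> K' \<longleftrightarrow> (v, u) \<in> H)"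
      and it: "in_tails U K' \<subseteq> in_tails U H - {\<beta>}"
      using MOD[OF less.prems(1) bx x b] by blast
    have ry: "rt K' y = rt H y"
    proof (rule forest_rt_agree[OF opt_forest[OF less.prems(1)] opt_forest[OF K']])
      fix z u assume yz: "(y, z) \<in> H\<^sup>*"
      have "z \<notin> subtree_verts Nv H \<beta>"
      proof
        assume "z \<in> subtree_verts Nv H \<beta>"
        then have "(z, \<beta>) \<in> H\<^sup>*" unfolding subtree_mem by blast
        then have "(y, \<beta>) \<in> H\<^sup>*" using yz by (meson rtrancl_trans)
        then have "rt H y = rt H \<beta>" using HH.rt_rtrancl by blast
        also have "\<dots> = rt H x" using HH.rt_arc[OF bx] .
        also have "\<dots> = rt H u0" using A1[OF less.prems(1) x u0] .
        finally show False using less.prems(3) by simp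
      qed
      then show "(z, u) \<in> K' \<longleftrightarrow> (z, u) \<in> H" using ag by blast
    qed
    have rx: "rt K' x = rt H x"
    proof (rule forest_rt_agree[OF opt_forest[OF less.prems(1)] opt_forest[OF K']])
      fix z u assume xz: "(x, z) \<in> H\<^sup>*"
      have "z \<notin> subtree_verts Nv H \<beta>"
      proof
        assume "z \<in> subtree_verts Nv H \<beta>"
        then have "(z, \<beta>) \<in> H\<^sup>*" unfolding subtree_mem by blast
        then have "(x, \<beta>) \<in> H\<^sup>*" using xz by (meson rtrancl_trans)
        then have "(\<beta>, \<beta>) \<in> H\<^sup>+" using bx by (meson rtrancl_into_trancl2)
        then show False using HH.acyc unfolding acyclic_def by blast
      qed
      then show "(z, u) \<in> K' \<longleftrightarrow> (z, u) \<in> H" using ag by blast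
    qed
    have "rt K' y \<noteq> rt K' u0"
    proof -
      have "rt K' u0 = rt K' x" using A1[OF K' u0 x] .
      also have "\<dots> = rt H x" by (rule rx)
      also have "\<dots> = rt H u0" using A1[OF less.prems(1) x u0] .
      finally show ?thesis using ry less.prems(3) by simp
    qed
    moreover have "card (in_tails U K') < n"
    proof -
      have "in_tails U K' \<subset> in_tails U H" using it \<open>\<beta> \<in> in_tails U H\<close> by blast
      then show ?thesis using finite_in_tails[OF less.prems(1)] less.prems(2) psubset_card_mono by metis
    qed
    ultimately show ?thesis using less.IH K' by blast
  qed
qed

lemma bcsep:
  assumes y: "y \<in> Nv" "y \<notin> U" and u0: "u0 \<in> U"
  shows "\<exists>H\<in>opt. in_tails U H = {} \<and> rt H y \<noteq> rt H u0"
proof -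
  obtain H where "H \<in> opt" "rt H y \<noteq> rt H u0" using A2[OF y u0] by blast
  then show ?thesis using bcsep_aux[OF y u0] by blast
qed

end



context atomloc
begin

lemma subtree_in_U:
  assumes it: "in_tails U G = {}" and u: "u \<in> U"
  shows "subtree_verts Nv G u \<subseteq> U"
  using BC[OF it _ u] unfolding subtree_verts_def by blast

lemma LemE:
  assumes G: "G \<in> opt" and itG: "in_tails U G = {}" and H: "H \<in> opt" and itH: "in_tails U H = {}"
    and ui: "ui \<in> U" and uy: "(ui, yi) \<in> G" and yi: "yi \<notin> U" and sep: "rt H yi \<noteq> rt H ui"
    and u: "u \<in> U" and uC: "u \<notin> subtree_verts Nv G ui"
  shows "\<exists>c\<in>subtree_verts Nv G ui. (u, c) \<in> H\<^sup>+"
proof (rule ccontr)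
  assume nc: "\<not> ?thesis"
  interpret HH: forest H using opt_forest[OF H] .
  define C where "C = subtree_verts Nv G ui"
  define X where "X = C \<inter> {v. rt H v = rt H ui}"
  have CU: "C \<subseteq> U" unfolding C_def using subtree_in_U[OF itG ui] .
  have XC: "X = C"
  proof -
    have "rt H v = rt H ui" if "v \<in> C" for v using A1[OF H _ ui] CU that by blast
    then show ?thesis unfolding X_def by blast
  qed
  have L: "mix H G X \<in> opt" using CR[OF G H uy sep] unfolding X_def C_def by blast
  have uiN: "ui \<in> Nv" using ui U_sub by blast
  have uiX: "ui \<in> X" unfolding XC C_def using uiN by (simp add: subtree_mem)
  have r1: "rt (mix H G X) u = rt H u"
  proof (rule forest_rt_agree[OF opt_forest[OF H] opt_forest[OF L]])
    fix z v assume uz: "(u, z) \<in> H\<^sup>*"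
    have "z \<notin> X"
    proof
      assume zX: "z \<in> X"
      show False
      proof (cases "z = u")
        case True then show False using zX uC unfolding XC C_def by simp
      next
        case False
        then have "(u, z) \<in> H\<^sup>+" using uz rtranclD by metis
        then show False using nc zX unfolding XC C_def by blast
      qed
    qed
    then show "(z, v) \<in> mix H G X \<longleftrightarrow> (z, v) \<in> H" unfolding mix_iff by simp
  qed
  have r2: "rt (mix H G X) yi = rt H yi"
  proof (rule forest_rt_agree[OF opt_forest[OF H] opt_forest[OF L]])
    fix z v assume yz: "(yi, z) \<in> H\<^sup>*"
    have "z \<notin> U"
    proof
      assume "z \<in> U"
      then have "yi \<in> U" using BC[OF itH yz] by blast
      then show False using yi by simp
    qed
    then have "z \<notin> X" using CU XC by blast
    then show "(z, v) \<in> mix H G X \<longleftrightarrow> (z, v) \<in> H" unfolding mix_iff by simp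
  qed
  interpret LL: forest "mix H G X" using opt_forest[OF L] .
  have "(ui, yi) \<in> mix H G X" using uiX uy unfolding mix_iff by simp
  then have r3: "rt (mix H G X) ui = rt (mix H G X) yi" using LL.rt_arc by blast
  have "rt (mix H G X) u = rt (mix H G X) ui" using A1[OF L u ui] .
  then have "rt H u = rt H yi" using r1 r2 r3 by simp
  moreover have "rt H u = rt H ui" using A1[OF H u ui] .
  ultimately show False using sep by simp
qed

lemma exit_rt:
  assumes G: "G \<in> opt" and it: "in_tails U G = {}" and u: "u \<in> U" and ex: "\<forall>w\<in>U. (u, w) \<notin> G"
    and nt: "\<not> terminal G u"
  shows "\<exists>y. (u, y) \<in> G \<and> y \<notin> U \<and> rt G u \<notin> U"
proof -
  interpret GG: forest G using opt_forest[OF G] .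
  obtain y where uy: "(u, y) \<in> G" using nt unfolding terminal_def by blast
  then have y: "y \<notin> U" using ex by blast
  have "rt G u = rt G y" using GG.rt_arc[OF uy] .
  moreover have "rt G y \<notin> U"
  proof
    assume "rt G y \<in> U"
    then have "y \<in> U" using BC[OF it GG.rt_path] by blast
    then show False using y by simp
  qed
  ultimately show ?thesis using uy y by auto
qed

lemma step2:
  assumes G: "G \<in> opt" and it: "in_tails U G = {}"
    and u1: "u1 \<in> U" and e1: "\<forall>w\<in>U. (u1, w) \<notin> G"
    and u2: "u2 \<in> U" and e2: "\<forall>w\<in>U. (u2, w) \<notin> G"
  shows "u1 = u2"
proof (rule ccontr)
  assume ne: "u1 \<noteq> u2"
  interpret GG: forest G using opt_forest[OF G] .
  have same: "rt G u1 = rt G u2" using A1[OF G u1 u2] .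
  have nt1: "\<not> terminal G u1"
  proof
    assume t1: "terminal G u1"
    then have "rt G u1 = u1" by (rule GG.rt_term)
    then have "rt G u2 \<in> U" using same u1 by simp
    then have t2: "terminal G u2" using exit_rt[OF G it u2 e2] by blast
    then have "rt G u2 = u2" by (rule GG.rt_term)
    then show False using ne same \<open>rt G u1 = u1\<close> by simp
  qed
  have nt2: "\<not> terminal G u2"
  proof
    assume t2: "terminal G u2"
    then have "rt G u2 = u2" by (rule GG.rt_term)
    then have "rt G u1 \<in> U" using same u2 by simp
    then show False using exit_rt[OF G it u1 e1 nt1] by blast
  qed
  obtain y1 where uy1: "(u1, y1) \<in> G" and y1: "y1 \<notin> U" and r1U: "rt G u1 \<notin> U"
    using exit_rt[OF G it u1 e1 nt1] by blast
  obtain y2 where uy2: "(u2, y2) \<in> G" and y2: "y2 \<notin> U"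
    using exit_rt[OF G it u2 e2 nt2] by blast
  have y1N: "y1 \<in> Nv" using opt_sub[OF G] uy1 by blast
  obtain H where H: "H \<in> opt" and itH: "in_tails U H = {}" and sep1: "rt H y1 \<noteq> rt H u1"
    using bcsep[OF y1N y1 u1] by blast
  interpret HH: forest H using opt_forest[OF H] .
  have acK: "acyclic (mix H G U)"
  proof (rule acyclic_split[where S = U])
    fix x y assume "(x, y) \<in> mix H G U" "x \<notin> U"
    then have "(x, y) \<in> H" unfolding mix_iff by simp
    then show "y \<notin> U" using itH \<open>x \<notin> U\<close> unfolding in_tails_def by blast
  next
    have "mix H G U \<inter> U \<times> U \<subseteq> G" unfolding mix_def by auto
    then show "acyclic (mix H G U \<inter> U \<times> U)" using GG.acyc acyclic_subset by blast
  next
    have "mix H G U \<inter> (- U) \<times> (- U) \<subseteq> H" unfolding mix_def by auto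
    then show "acyclic (mix H G U \<inter> (- U) \<times> (- U))" using HH.acyc acyclic_subset by blast
  qed
  have acL: "acyclic (mix G H U)"
  proof (rule acyclic_split[where S = U])
    fix x y assume "(x, y) \<in> mix G H U" "x \<notin> U"
    then have "(x, y) \<in> G" unfolding mix_iff by simp
    then show "y \<notin> U" using it \<open>x \<notin> U\<close> unfolding in_tails_def by blast
  next
    have "mix G H U \<inter> U \<times> U \<subseteq> H" unfolding mix_def by auto
    then show "acyclic (mix G H U \<inter> U \<times> U)" using HH.acyc acyclic_subset by blast
  next
    have "mix G H U \<inter> (- U) \<times> (- U) \<subseteq> G" unfolding mix_def by auto
    then show "acyclic (mix G H U \<inter> (- U) \<times> (- U))" using GG.acyc acyclic_subset by blast
  qed
  have rGU: "roots Nv G \<inter> U = {}"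
  proof (rule ccontr)
    assume "roots Nv G \<inter> U \<noteq> {}"
    then obtain v where v: "v \<in> roots Nv G" "v \<in> U" by blast
    then have "rt G v = v" using GG.rt_term roots_terminal by blast
    moreover have "rt G v = rt G u1" using A1[OF G v(2) u1] .
    ultimately show False using r1U v(2) by simp
  qed
  have rHU: "roots Nv H \<inter> U \<subseteq> {rt H u1}"
  proof
    fix v assume v: "v \<in> roots Nv H \<inter> U"
    then have "rt H v = v" using HH.rt_term roots_terminal by blast
    moreover have "rt H v = rt H u1" using A1[OF H _ u1] v by blast
    ultimately show "v \<in> {rt H u1}" by simp
  qed
  define h where "h = card (roots Nv H \<inter> U)"
  have "card (roots Nv H \<inter> U) \<le> card {rt H u1}" by (rule card_mono[OF _ rHU]) simp
  then have h1: "h \<le> 1" unfolding h_def by simp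
  have fr: "finite (roots Nv G)" "finite (roots Nv H)" using finite_roots by auto
  have eL: "roots Nv (mix G H U) = roots Nv G \<union> (roots Nv H \<inter> U)"
    using roots_mix[of Nv G H U] rGU by blast
  have "card (roots Nv G \<union> (roots Nv H \<inter> U)) = card (roots Nv G) + card (roots Nv H \<inter> U)"
    by (rule card_Un_disjoint) (use fr rGU in auto)
  then have n1: "card (roots Nv (mix G H U)) = k + h"
    unfolding eL h_def using opt_ntrees[OF G] by simp
  have eK: "roots Nv (mix H G U) = roots Nv H - U"
    using roots_mix[of Nv H G U] rGU by blast
  have c2: "card (roots Nv H - U) = card (roots Nv H) - h"
    unfolding h_def using card_Diff_subset_Int fr(2) by (metis finite_Int)
  have c3: "h \<le> card (roots Nv H)"
    unfolding h_def using fr(2) by (simp add: card_mono)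
  have n2: "card (roots Nv (mix H G U)) + h = k"
    unfolding eK c2 using c3 opt_ntrees[OF H] by simp
  have K: "mix H G U \<in> opt" using GM[OF G H acL acK n1 n2 h1] by blast
  interpret KK: forest "mix H G U" using opt_forest[OF K] .
  have rKy: "rt (mix H G U) y = rt H y" if "y \<notin> U" for y
  proof (rule forest_rt_agree[OF opt_forest[OF H] opt_forest[OF K]])
    fix z v assume yz: "(y, z) \<in> H\<^sup>*"
    have "z \<notin> U"
    proof
      assume "z \<in> U"
      then have "y \<in> U" using BC[OF itH yz] by blast
      then show False using that by simp
    qed
    then show "(z, v) \<in> mix H G U \<longleftrightarrow> (z, v) \<in> H" unfolding mix_iff by simp
  qed
  have "(u1, y1) \<in> mix H G U" using u1 uy1 unfolding mix_iff by simp
  then have k1': "rt (mix H G U) u1 = rt H y1" using KK.rt_arc rKy[OF y1] by simp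
  have "(u2, y2) \<in> mix H G U" using u2 uy2 unfolding mix_iff by simp
  then have k2': "rt (mix H G U) u2 = rt H y2" using KK.rt_arc rKy[OF y2] by simp
  have "rt (mix H G U) u1 = rt (mix H G U) u2" using A1[OF K u1 u2] .
  then have y12: "rt H y2 = rt H y1" using k1' k2' by simp
  have sep2: "rt H y2 \<noteq> rt H u2" using y12 sep1 A1[OF H u1 u2] by simp
  define C1 where "C1 = subtree_verts Nv G u1"
  define C2 where "C2 = subtree_verts Nv G u2"
  have C1U: "C1 \<subseteq> U" unfolding C1_def using subtree_in_U[OF it u1] .
  have C2U: "C2 \<subseteq> U" unfolding C2_def using subtree_in_U[OF it u2] .
  have E1: "\<exists>c\<in>C1. (u, c) \<in> H\<^sup>+" if "u \<in> U" "u \<notin> C1" for u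
    using LemE[OF G it H itH u1 uy1 y1 sep1 that[unfolded C1_def]] unfolding C1_def .
  have E2: "\<exists>c\<in>C2. (u, c) \<in> H\<^sup>+" if "u \<in> U" "u \<notin> C2" for u
    using LemE[OF G it H itH u2 uy2 y2 sep2 that[unfolded C2_def]] unfolding C2_def .
  have disj: "C1 \<inter> C2 = {}"
  proof (rule ccontr)
    assume "C1 \<inter> C2 \<noteq> {}"
    then obtain v where "v \<in> C1" "v \<in> C2" by blast
    then have p1: "(v, u1) \<in> G\<^sup>*" and p2: "(v, u2) \<in> G\<^sup>*" unfolding C1_def C2_def subtree_mem by auto
    have "(u1, u2) \<in> G\<^sup>* \<or> (u2, u1) \<in> G\<^sup>*" using comparable[OF GG.func p1 p2] .
    then show False
    proof
      assume "(u1, u2) \<in> G\<^sup>*"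
      then have "(y1, u2) \<in> G\<^sup>*" using GG.step_to ne uy1 by blast
      then have "y1 \<in> U" using BC[OF it _ u2] by blast
      then show False using y1 by simp
    next
      assume "(u2, u1) \<in> G\<^sup>*"
      then have "(y2, u1) \<in> G\<^sup>*" using GG.step_to ne uy2 by metis
      then have "y2 \<in> U" using BC[OF it _ u1] by blast
      then show False using y2 by simp
    qed
  qed
  have wfH: "wf ((H\<^sup>+)\<inverse>)"
  proof -
    have "wf (H\<inverse>)" using finite_acyclic_wf_converse[OF HH.fin HH.acyc] .
    then have "wf ((H\<inverse>)\<^sup>+)" by (rule wf_trancl)
    then show ?thesis by (simp add: trancl_converse)
  qed
  have u1C: "u1 \<in> C1" unfolding C1_def using u1 U_sub by (simp add: subtree_mem subset_iff)
  then have "u1 \<in> C1 \<union> C2" by blast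
  then obtain m where m: "m \<in> C1 \<union> C2" and mmax: "\<And>z. (z, m) \<in> (H\<^sup>+)\<inverse> \<Longrightarrow> z \<notin> C1 \<union> C2"
    using wfE_min[OF wfH] by metis
  show False
  proof (cases "m \<in> C1")
    case True
    then have "m \<in> U" "m \<notin> C2" using C1U disj by auto
    then obtain c where "c \<in> C2" "(m, c) \<in> H\<^sup>+" using E2 by blast
    then show False using mmax[of c] by blast
  next
    case False
    then have "m \<in> C2" using m by blast
    then have "m \<in> U" "m \<notin> C1" using C2U False by auto
    then obtain c where "c \<in> C1" "(m, c) \<in> H\<^sup>+" using E1 by blast
    then show False using mmax[of c] by blast
  qed
qed

end



theorem proposition2:
  fixes Nv :: "'a set" and Ar :: "('a \<times> 'a) set" and w :: "'a \<times> 'a \<Rightarrow> real"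
    and k :: nat and F :: "('a \<times> 'a) set" and U :: "'a set"
  assumes "wdigraph Nv Ar"
    and "forests_k Nv Ar 1 \<noteq> {}"
    and "1 \<le> k" and "k \<le> card Nv - 1"
    and "phi Nv Ar w (k - 1) - phi Nv Ar w k > phi Nv Ar w k - phi Nv Ar w (k + 1)"
    and "F \<in> opt_forests Nv Ar w k"
    and "is_atom (alg_k Nv Ar w k) U"
  defines "D \<equiv> (\<Union>\<beta>\<in>in_tails U F. subtree_verts Nv F \<beta>)"
  shows "D \<inter> U = {} \<and>
         (\<forall>\<beta>\<in>in_tails U F. \<forall>\<gamma>\<in>in_tails U F. \<beta> \<noteq> \<gamma> \<longrightarrow>
           subtree_verts Nv F \<beta> \<inter> subtree_verts Nv F \<gamma> = {}) \<and>
         (\<exists>G\<in>opt_forests Nv Ar w k. (\<forall>v\<in>Nv - D. out_arcs G v = out_arcs F v) \<and> in_tails U G = {})"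
proof -
  have Nne: "Nv \<noteq> {}"
  proof
    assume "Nv = {}"
    then show False using assms(3,4) by simp
  qed
  interpret atomloc Nv Ar w k U
    by unfold_locales (fact assms(1), fact assms(3), fact Nne, fact assms(5), fact assms(7))
  have F: "F \<in> opt" using assms(6) .
  interpret FF: forest F using opt_forest[OF F] .
  have FN: "F \<subseteq> Nv \<times> Nv" using opt_sub[OF F] .
  have Dmem: "v \<in> D \<longleftrightarrow> (\<exists>\<gamma>\<in>in_tails U F. v \<in> Nv \<and> (v, \<gamma>) \<in> F\<^sup>*)" for v
    unfolding D_def UN_iff subtree_mem by (rule refl)
  have itD: "in_tails U F \<subseteq> D"
  proof
    fix b assume b: "b \<in> in_tails U F"
    then have "b \<in> Nv" using in_tails_Nv[OF F] by blast
    then show "b \<in> D" using Dmem b by blast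
  qed
  have iter: "\<And>K. K \<in> opt \<Longrightarrow> card (in_tails U K) = n \<Longrightarrow>
      (\<forall>v\<in>Nv - D. \<forall>u. (v, u) \<in> K \<longleftrightarrow> (v, u) \<in> F) \<Longrightarrow> (\<forall>v\<in>U. \<forall>u. (v, u) \<in> K \<longleftrightarrow> (v, u) \<in> F) \<Longrightarrow>
      in_tails U K \<subseteq> in_tails U F \<Longrightarrow>
      \<exists>G\<in>opt. (\<forall>v\<in>Nv - D. \<forall>u. (v, u) \<in> G \<longleftrightarrow> (v, u) \<in> F) \<and> (\<forall>v\<in>U. \<forall>u. (v, u) \<in> G \<longleftrightarrow> (v, u) \<in> F)
        \<and> in_tails U G = {}" for n
  proof (induction n rule: less_induct)
    case (less n K)
    show ?case
    proof (cases "in_tails U K = {}")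
      case True then show ?thesis using less.prems(1,3,4) by (intro bexI[of _ K]) simp_all
    next
      case False
      then obtain \<beta> where bK: "\<beta> \<in> in_tails U K" by blast
      then obtain x where bx: "(\<beta>, x) \<in> K" and x: "x \<in> U" and b: "\<beta> \<notin> U"
        unfolding in_tails_def by blast
      obtain K' where K': "K' \<in> opt"
        and ag: "\<And>v u. v \<notin> subtree_verts Nv K \<beta> \<Longrightarrow> ((v, u) \<in> K' \<longleftrightarrow> (v, u) \<in> K)"
        and agU: "\<forall>v\<in>U. \<forall>u. (v, u) \<in> K' \<longleftrightarrow> (v, u) \<in> K"
        and it: "in_tails U K' \<subseteq> in_tails U K - {\<beta>}"
        using MOD[OF less.prems(1) bx x b] by blast
      have sub: "subtree_verts Nv K \<beta> \<subseteq> D"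
      proof
        fix v assume v: "v \<in> subtree_verts Nv K \<beta>"
        then have vN: "v \<in> Nv" and vb: "(v, \<beta>) \<in> K\<^sup>*" unfolding subtree_mem by auto
        show "v \<in> D"
        proof (rule ccontr)
          assume vD: "v \<notin> D"
          have "(v, z) \<in> K\<^sup>* \<Longrightarrow> z \<in> Nv - D" for z
          proof (induction rule: rtrancl_induct)
            case base then show ?case using vN vD by simp
          next
            case (step y z)
            then have "(y, z) \<in> F" using less.prems(3) by blast
            then have zN: "z \<in> Nv" using FN by blast
            have "z \<notin> D"
            proof
              assume "z \<in> D"
              then obtain \<gamma> where g: "\<gamma> \<in> in_tails U F" "(z, \<gamma>) \<in> F\<^sup>*" using Dmem by blast
              then have "(y, \<gamma>) \<in> F\<^sup>*" using \<open>(y, z) \<in> F\<close> by (meson converse_rtrancl_into_rtrancl)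
              moreover have "y \<in> Nv" using step.IH by blast
              ultimately have "y \<in> D" unfolding Dmem using g(1) by blast
              then show False using step.IH by blast
            qed
            then show ?case using zN by blast
          qed
          from this[OF vb] have "\<beta> \<notin> D" by blast
          moreover have "\<beta> \<in> D" using bK less.prems(5) itD by blast
          ultimately show False by simp
        qed
      qed
      have p3: "\<forall>v\<in>Nv - D. \<forall>u. (v, u) \<in> K' \<longleftrightarrow> (v, u) \<in> F"
      proof (intro ballI allI)
        fix v u assume v: "v \<in> Nv - D"
        then have "v \<notin> subtree_verts Nv K \<beta>" using sub by blast
        then have "(v, u) \<in> K' \<longleftrightarrow> (v, u) \<in> K" by (rule ag)
        also have "\<dots> \<longleftrightarrow> (v, u) \<in> F" using less.prems(3) v by blast
        finally show "(v, u) \<in> K' \<longleftrightarrow> (v, u) \<in> F" .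
      qed
      have p4: "\<forall>v\<in>U. \<forall>u. (v, u) \<in> K' \<longleftrightarrow> (v, u) \<in> F"
      proof (intro ballI allI)
        fix v u assume v: "v \<in> U"
        have "(v, u) \<in> K' \<longleftrightarrow> (v, u) \<in> K" using agU v by blast
        also have "\<dots> \<longleftrightarrow> (v, u) \<in> F" using less.prems(4) v by blast
        finally show "(v, u) \<in> K' \<longleftrightarrow> (v, u) \<in> F" .
      qed
      have p5: "in_tails U K' \<subseteq> in_tails U F" using it less.prems(5) by blast
      have "in_tails U K' \<subset> in_tails U K" using it bK by blast
      then have "card (in_tails U K') < n"
        using finite_in_tails[OF less.prems(1)] less.prems(2) psubset_card_mono by metis
      then show ?thesis using less.IH[OF _ K' refl p3 p4 p5] by blast
    qed
  qed
  obtain G where G: "G \<in> opt" and GD: "\<forall>v\<in>Nv - D. \<forall>u. (v, u) \<in> G \<longleftrightarrow> (v, u) \<in> F"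
    and GU: "\<forall>v\<in>U. \<forall>u. (v, u) \<in> G \<longleftrightarrow> (v, u) \<in> F" and itG: "in_tails U G = {}"
    using iter[OF F refl] by auto
  have part3: "\<exists>G\<in>opt_forests Nv Ar w k. (\<forall>v\<in>Nv - D. out_arcs G v = out_arcs F v) \<and> in_tails U G = {}"
  proof (intro bexI[of _ G] conjI ballI)
    fix v assume "v \<in> Nv - D"
    then show "out_arcs G v = out_arcs F v" using GD by (intro out_arcs_eqI) blast
  qed (use G itG in auto)
  define ex where "ex u \<longleftrightarrow> u \<in> U \<and> (\<forall>w\<in>U. (u, w) \<notin> F)" for u
  have exU: "e1 = e2" if "ex e1" "ex e2" for e1 e2
  proof -
    have "\<forall>w\<in>U. (e1, w) \<notin> G" using that(1) GU unfolding ex_def by blast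
    moreover have "\<forall>w\<in>U. (e2, w) \<notin> G" using that(2) GU unfolding ex_def by blast
    moreover have "e1 \<in> U" "e2 \<in> U" using that unfolding ex_def by auto
    ultimately show ?thesis using step2[OF G itG] by blast
  qed
  have reach_ex: "u \<in> U \<Longrightarrow> \<exists>e. ex e \<and> (u, e) \<in> F\<^sup>*" for u
  proof (induction u rule: wf_induct_rule[OF finite_acyclic_wf_converse[OF FF.fin FF.acyc]])
    case (1 u)
    show ?case
    proof (cases "ex u")
      case True then show ?thesis by blast
    next
      case False
      then obtain w where w: "w \<in> U" "(u, w) \<in> F" using "1.prems" unfolding ex_def by blast
      then obtain e where "ex e" "(w, e) \<in> F\<^sup>*" using "1.IH"[of w] by blast
      then show ?thesis using w(2) by (meson converse_rtrancl_into_rtrancl)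
    qed
  qed
  have part1: "D \<inter> U = {}"
  proof (rule ccontr)
    assume "D \<inter> U \<noteq> {}"
    then obtain z where zD: "z \<in> D" and zU: "z \<in> U" by blast
    then obtain \<beta> where bF: "\<beta> \<in> in_tails U F" and zb: "(z, \<beta>) \<in> F\<^sup>*" unfolding Dmem by blast
    then obtain x where bx: "(\<beta>, x) \<in> F" and x: "x \<in> U" and b: "\<beta> \<notin> U"
      unfolding in_tails_def by blast
    obtain e where e: "ex e" and xe: "(x, e) \<in> F\<^sup>*" using reach_ex[OF x] by blast
    have P: "(z, t) \<in> F\<^sup>* \<Longrightarrow> t \<in> U \<or> (e, t) \<in> F\<^sup>+" for t
    proof (induction rule: rtrancl_induct)
      case base then show ?case using zU by simp
    next
      case (step t t')
      show ?case
      proof (cases "t \<in> U")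
        case True
        show ?thesis
        proof (cases "t' \<in> U")
          case True then show ?thesis by simp
        next
          case False
          have "\<forall>w\<in>U. (t, w) \<notin> F"
          proof (intro ballI notI)
            fix w assume "w \<in> U" "(t, w) \<in> F"
            then have "w = t'" using FF.func step.hyps(2) functionalD by metis
            then show False using False \<open>w \<in> U\<close> by simp
          qed
          then have "ex t" unfolding ex_def using \<open>t \<in> U\<close> by blast
          then have "t = e" using exU e by blast
          then have "(e, t') \<in> F\<^sup>+" using step.hyps(2) by (simp add: r_into_trancl')
          then show ?thesis by (rule disjI2)
        qed
      next
        case False
        then have "(e, t) \<in> F\<^sup>+" using step.IH by blast
        then show ?thesis using step.hyps(2) by (meson trancl_into_trancl)
      qed
    qed
    have "\<beta> \<in> U \<or> (e, \<beta>) \<in> F\<^sup>+" using P[OF zb] .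
    then have "(e, \<beta>) \<in> F\<^sup>+" using b by simp
    then have "(e, x) \<in> F\<^sup>+" using bx by (meson trancl_into_trancl)
    then have "(e, e) \<in> F\<^sup>+" using xe by (meson trancl_rtrancl_trancl)
    then show False using FF.acyc unfolding acyclic_def by blast
  qed
  have part2: "\<forall>\<beta>\<in>in_tails U F. \<forall>\<gamma>\<in>in_tails U F. \<beta> \<noteq> \<gamma> \<longrightarrow>
           subtree_verts Nv F \<beta> \<inter> subtree_verts Nv F \<gamma> = {}"
  proof (intro ballI impI)
    fix \<beta> \<gamma> assume bF: "\<beta> \<in> in_tails U F" and gF: "\<gamma> \<in> in_tails U F" and ne: "\<beta> \<noteq> \<gamma>"
    have key: "False" if a: "a \<in> in_tails U F" and c: "c \<in> in_tails U F" and ac: "a \<noteq> c"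
      and ca: "(c, a) \<in> F\<^sup>*" for a c
    proof -
      obtain y where cy: "(c, y) \<in> F" and y: "y \<in> U" using c unfolding in_tails_def by blast
      have "(y, a) \<in> F\<^sup>*" using FF.step_to[OF ca] ac cy by metis
      moreover have "y \<in> Nv" using FN cy by blast
      ultimately have "y \<in> D" unfolding Dmem using a by blast
      then show False using part1 y by blast
    qed
    show "subtree_verts Nv F \<beta> \<inter> subtree_verts Nv F \<gamma> = {}"
    proof (rule ccontr)
      assume "subtree_verts Nv F \<beta> \<inter> subtree_verts Nv F \<gamma> \<noteq> {}"
      then obtain v where v1: "(v, \<beta>) \<in> F\<^sup>*" and v2: "(v, \<gamma>) \<in> F\<^sup>*"
        by (auto simp: subtree_mem)
      have "(\<beta>, \<gamma>) \<in> F\<^sup>* \<or> (\<gamma>, \<beta>) \<in> F\<^sup>*" using comparable[OF FF.func v1 v2] .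
      then show False
      proof
        assume "(\<beta>, \<gamma>) \<in> F\<^sup>*"
        then show False using key[OF gF bF ne[symmetric]] by simp
      next
        assume "(\<gamma>, \<beta>) \<in> F\<^sup>*"
        then show False using key[OF bF gF ne] by simp
      qed
    qed
  qed
  show ?thesis using part1 part2 part3 by (intro conjI)
qed


end
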